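(* Let $m\ge3$, $\mu>0$, $c\in\mathbb{R}^m_{\ge0}$ with matrix form $\mathbf{C}\in\mathbb{R}^{L\times R}_{\ge0}$ ($\mathbf{C}_{ij}=c_{(i,j)}$), demands $d=(d_L,d_R)$ with $d_L\in\Delta^L$, $d_R\in\Delta^R$, and $\mathbf{K}=\exp(-\mathbf{C}/\mu)$ entrywise. Let $u\in\mathbb{R}^L_{>0}$, $v\in\mathbb{R}^R_{>0}$, $\mathbf{X}=\mathrm{diag}(u)\mathbf{K}\mathrm{diag}(v)$, and $x\in\mathbb{R}^m_{>0}$ the vectorization $x_{(i,j)}=\mathbf{X}_{ij}$. Suppose that for some $\Delta\ge0$, $$\|\mathbf{X}\mathbf{1}-d_L\|_1+\|\mathbf{X}^\top\mathbf{1}-d_R\|_1\le\Delta.$$ Then $\hat x:=x/\|x\|_1\in\Delta^m$ satisfies $$\langle c,\hat x\rangle+\mu H(\hat x)\le\mathrm{OPT}_\mu(d)+3C\Delta+\mu m^{-30},\qquad C:=2(\|c\|_\infty+33\mu\log m).$$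
   Context: $L,R$ are finite nonempty sets, $m=|L||R|$, and coordinates of $\mathbb{R}^m$ are indexed by pairs $(i,j)\in L\times R$. $\mathbf{B}\in\{0,1\}^{m\times(|L|+|R|)}$ is the unsigned edge-vertex incidence matrix of the complete bipartite graph on $L\cup R$: $\mathbf{B}_{(i,j),v}=1$ iff $v\in\{i,j\}$. $H(x)=\sum_i x_i\log x_i$ ($0\log0=0$, natural log). $\mathrm{OPT}_\mu(d)=\min_{x\in\Delta^m,\ \mathbf{B}^\top x=d}\ \langle c,x\rangle+\mu H(x)$. $\Delta^k$ denotes the probability simplex. *)

theory Defs
  imports "HOL-Analysis.Analysis"
begin

definition negent :: "('i \<Rightarrow> real) \<Rightarrow> 'i set \<Rightarrow> real" where
  "negent x S = (\<Sum>k\<in>S. (if x k = 0 then 0 else x k * ln (x k)))"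

text \<open>Probability prob_simplex over a finite index set S (values outside S irrelevant).\<close>
definition prob_simplex :: "'i set \<Rightarrow> ('i \<Rightarrow> real) set" where
  "prob_simplex S = {x. (\<forall>k\<in>S. 0 \<le> x k) \<and> (\<Sum>k\<in>S. x k) = 1}"

definition ent_obj :: "'a set \<Rightarrow> 'b set \<Rightarrow> ('a \<times> 'b \<Rightarrow> real) \<Rightarrow> real \<Rightarrow> ('a \<times> 'b \<Rightarrow> real) \<Rightarrow> real" where
  "ent_obj L R c \<mu> x = (\<Sum>e\<in>L \<times> R. c e * x e) + \<mu> * negent x (L \<times> R)"

text \<open>B^T x = d for the complete bipartite incidence matrix: row sums = d_L, column sums = d_R.\<close>
definition marginals_eq :: "'a set \<Rightarrow> 'b set \<Rightarrow> ('a \<times> 'b \<Rightarrow> real) \<Rightarrow> ('a \<Rightarrow> real) \<Rightarrow> ('b \<Rightarrow> real) \<Rightarrow> bool" where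
  "marginals_eq L R x dL dR \<longleftrightarrow>
     (\<forall>i\<in>L. (\<Sum>j\<in>R. x (i, j)) = dL i) \<and> (\<forall>j\<in>R. (\<Sum>i\<in>L. x (i, j)) = dR j)"

definition OPT :: "'a set \<Rightarrow> 'b set \<Rightarrow> ('a \<times> 'b \<Rightarrow> real) \<Rightarrow> real \<Rightarrow> ('a \<Rightarrow> real) \<Rightarrow> ('b \<Rightarrow> real) \<Rightarrow> real" where
  "OPT L R c \<mu> dL dR = Inf (ent_obj L R c \<mu> ` {x. x \<in> prob_simplex (L \<times> R) \<and> marginals_eq L R x dL dR})"

end

theory Submission
  imports Defs
begin


definition hf :: "real \<Rightarrow> real" where "hf t = (if t = 0 then 0 else t * ln t)"

lemma negent_hf: "negent x S = (\<Sum>k\<in>S. hf (x k))"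
  by (simp add: negent_def hf_def)

lemma ln_ge_1m: "0 < x \<Longrightarrow> 1 - 1 / x \<le> ln (x::real)"
proof -
  assume x: "0 < x"
  have "ln (1/x) \<le> 1/x - 1" using x by (intro ln_le_minus_one) simp
  moreover have "ln (1/x) = - ln x" using x by (simp add: ln_div)
  ultimately show ?thesis by simp
qed

lemma hf_super:
  assumes "0 \<le> a" "0 \<le> (b::real)" shows "hf a + hf b \<le> hf (a + b)"
proof (cases "a = 0 \<or> b = 0")
  case True then show ?thesis using assms by (auto simp: hf_def)
next
  case False
  then have a: "a > 0" and b: "b > 0" using assms by auto
  have "a * ln a \<le> a * ln (a+b)" using a b by (intro mult_left_mono) auto
  moreover have "b * ln b \<le> b * ln (a+b)" using a b by (intro mult_left_mono) auto
  ultimately show ?thesis using a b by (simp add: hf_def distrib_right add_mono)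
qed

lemma hf_add_le:
  assumes "0 \<le> a" "0 \<le> (b::real)" "a + b \<le> 1" shows "hf (a + b) \<le> hf a + b"
proof (cases "a + b = 0")
  case True then show ?thesis using assms by (auto simp: hf_def)
next
  case False
  then have ab: "a + b > 0" using assms by auto
  have l: "ln (a+b) \<le> 0" using ab assms by simp
  show ?thesis
  proof (cases "a = 0")
    case True
    then have "ln b \<le> 0" using l by simp
    then have "b * ln b \<le> 0" using assms by (simp add: mult_nonneg_nonpos)
    moreover have "hf (a+b) = b * ln b" using True ab by (simp add: hf_def)
    moreover have "hf a = 0" using True by (simp add: hf_def)
    ultimately show ?thesis using assms by linarith
  next
    case False
    then have a: "a > 0" using assms by auto
    have "ln (a+b) - ln a = ln ((a+b)/a)" using a ab by (simp add: ln_div)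
    also have "\<dots> \<le> (a+b)/a - 1" using a ab by (intro ln_le_minus_one) simp
    also have "\<dots> = b / a" using a by (simp add: field_simps)
    finally have "a * (ln (a+b) - ln a) \<le> a * (b/a)" using a by (intro mult_left_mono) auto
    then have "a * ln (a+b) \<le> a * ln a + b" using a by (simp add: algebra_simps)
    moreover have "b * ln (a+b) \<le> 0" using l assms by (simp add: mult_nonneg_nonpos)
    ultimately show ?thesis using a ab by (simp add: hf_def distrib_right)
  qed
qed

lemma hf_lower:
  assumes "0 \<le> u" "0 < (q::real)" shows "u * ln q + u - q \<le> hf u"
proof (cases "u = 0")
  case True then show ?thesis using assms by (simp add: hf_def)
next
  case False
  then have u: "u > 0" using assms by auto
  have "1 - 1/(u/q) \<le> ln (u/q)" using u assms by (intro ln_ge_1m) simp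
  then have "u * (1 - q/u) \<le> u * (ln u - ln q)" using u assms
    by (intro mult_left_mono) (auto simp: ln_div)
  then show ?thesis using u by (simp add: hf_def algebra_simps)
qed

lemma hf_le1: "0 \<le> t \<Longrightarrow> t \<le> 1 \<Longrightarrow> hf t \<le> 0"
  by (auto simp: hf_def mult_nonneg_nonpos)

lemma ent_perturb:
  assumes S: "finite S" "S \<noteq> {}"
    and nn: "\<forall>k\<in>S. 0 \<le> p k \<and> 0 \<le> u k \<and> 0 \<le> w k \<and> p k + w k \<le> 1"
    and su: "(\<Sum>k\<in>S. u k) = \<delta>" and sw: "(\<Sum>k\<in>S. w k) = \<delta>" and d: "\<delta> > 0"
  shows "(\<Sum>k\<in>S. hf (p k + w k)) - (\<Sum>k\<in>S. hf (p k + u k))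
         \<le> \<delta> + \<delta> * ln (real (card S)) - \<delta> * ln \<delta>"
proof -
  have cS: "real (card S) > 0" using S by (simp add: card_gt_0_iff)
  define q where "q = \<delta> / real (card S)"
  have q: "q > 0" using d cS by (simp add: q_def)
  have 1: "(\<Sum>k\<in>S. hf (p k + w k)) \<le> (\<Sum>k\<in>S. hf (p k) + w k)"
    using nn by (intro sum_mono hf_add_le) auto
  have 2: "(\<Sum>k\<in>S. hf (p k) + hf (u k)) \<le> (\<Sum>k\<in>S. hf (p k + u k))"
    using nn by (intro sum_mono hf_super) auto
  have 3: "(\<Sum>k\<in>S. u k * ln q + u k - q) \<le> (\<Sum>k\<in>S. hf (u k))"
    using nn q by (intro sum_mono hf_lower) auto
  have "(\<Sum>k\<in>S. u k * ln q + u k - q) = \<delta> * ln q + \<delta> - real (card S) * q"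
    using su by (simp add: sum.distrib sum_subtractf sum_distrib_right[symmetric])
  also have "\<dots> = \<delta> * ln \<delta> - \<delta> * ln (real (card S))"
    using cS d by (simp add: q_def ln_div algebra_simps)
  finally have 4: "\<delta> * ln \<delta> - \<delta> * ln (real (card S)) \<le> (\<Sum>k\<in>S. hf (u k))" using 3 by simp
  show ?thesis using 1 2 4 sw by (simp add: sum.distrib)
qed

lemma obj_perturb:
  assumes S: "finite (L \<times> R)" "L \<times> R \<noteq> {}"
    and nn: "\<forall>k\<in>L \<times> R. 0 \<le> p k \<and> 0 \<le> u k \<and> 0 \<le> w k \<and> p k + w k \<le> 1"
    and su: "(\<Sum>k\<in>L \<times> R. u k) = \<delta>" and sw: "(\<Sum>k\<in>L \<times> R. w k) = \<delta>" and d: "\<delta> \<ge> 0"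
    and c: "\<forall>k\<in>L \<times> R. 0 \<le> c k \<and> c k \<le> K" and mu: "\<mu> > 0"
  shows "ent_obj L R c \<mu> (\<lambda>k. p k + w k) \<le> ent_obj L R c \<mu> (\<lambda>k. p k + u k)
          + K * \<delta> + \<mu> * (\<delta> + \<delta> * ln (real (card (L \<times> R))) - \<delta> * ln \<delta>)"
proof (cases "\<delta> = 0")
  case True
  have "\<forall>k\<in>L \<times> R. u k = 0" using su nn S True by (subst sum_nonneg_eq_0_iff[symmetric]) auto
  moreover have "\<forall>k\<in>L \<times> R. w k = 0" using sw nn S True by (subst sum_nonneg_eq_0_iff[symmetric]) auto
  ultimately have "ent_obj L R c \<mu> (\<lambda>k. p k + w k) = ent_obj L R c \<mu> (\<lambda>k. p k + u k)"
    unfolding ent_obj_def negent_hf by (intro arg_cong2[where f="(+)"] arg_cong2[where f="(*)"] refl sum.cong) auto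
  then show ?thesis using True by simp
next
  case False
  then have d': "\<delta> > 0" using d by simp
  have e: "(\<Sum>k\<in>L \<times> R. hf (p k + w k)) - (\<Sum>k\<in>L \<times> R. hf (p k + u k))
         \<le> \<delta> + \<delta> * ln (real (card (L \<times> R))) - \<delta> * ln \<delta>"
    by (rule ent_perturb[OF S nn su sw d'])
  have c1: "(\<Sum>k\<in>L \<times> R. c k * w k) \<le> (\<Sum>k\<in>L \<times> R. K * w k)"
    using nn c by (intro sum_mono mult_right_mono) auto
  have c2: "0 \<le> (\<Sum>k\<in>L \<times> R. c k * u k)"
    using nn c by (intro sum_nonneg) auto
  have "(\<Sum>k\<in>L \<times> R. c k * (p k + w k)) = (\<Sum>k\<in>L \<times> R. c k * p k) + (\<Sum>k\<in>L \<times> R. c k * w k)"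
    by (simp add: distrib_left sum.distrib)
  moreover have "(\<Sum>k\<in>L \<times> R. c k * (p k + u k)) = (\<Sum>k\<in>L \<times> R. c k * p k) + (\<Sum>k\<in>L \<times> R. c k * u k)"
    by (simp add: distrib_left sum.distrib)
  moreover have "(\<Sum>k\<in>L \<times> R. K * w k) = K * \<delta>" using sw by (simp add: sum_distrib_left[symmetric])
  moreover have "\<mu> * (\<Sum>k\<in>L \<times> R. hf (p k + w k)) \<le> \<mu> * (\<Sum>k\<in>L \<times> R. hf (p k + u k))
       + \<mu> * (\<delta> + \<delta> * ln (real (card (L \<times> R))) - \<delta> * ln \<delta>)"
    using mult_left_mono[OF e, of \<mu>] mu by (simp add: algebra_simps)
  ultimately show ?thesis using c1 c2 unfolding ent_obj_def negent_hf by linarith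
qed

lemma min_bound:
  assumes "0 \<le> (y::real)"
  shows "y - min y (min (y * a) (y * b)) \<le> y * max 0 (1 - a) + y * max 0 (1 - b)"
proof -
  have m: "y * max 0 t = max 0 (y * t)" for t
  proof (cases "t \<ge> 0")
    case True then show ?thesis using assms by (simp add: max_def)
  next
    case False then have "y * t \<le> 0" using assms by (simp add: mult_nonneg_nonpos)
    then show ?thesis using False by (simp add: max_def)
  qed
  have "y * max 0 (1 - a) = max 0 (y - y * a)" using m[of "1-a"] by (simp add: algebra_simps)
  moreover have "y * max 0 (1 - b) = max 0 (y - y * b)" using m[of "1-b"] by (simp add: algebra_simps)
  ultimately show ?thesis by (simp add: min_def max_def)
qed

lemma sum_zero_nonneg:
  assumes "finite A" "\<forall>x\<in>A. 0 \<le> f x" "sum f A = (0::real)" "x \<in> A" shows "f x = 0"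
  using assms sum_nonneg_eq_0_iff by blast

lemma sum_LR: "(\<Sum>e\<in>A \<times> B. g e) = (\<Sum>i\<in>A. \<Sum>j\<in>B. g (i, j))"
  by (simp add: sum.cartesian_product)

lemma rounding:
  assumes fin: "finite L" "finite R"
    and y: "\<forall>e\<in>L \<times> R. 0 \<le> y e" "(\<Sum>e\<in>L \<times> R. y e) = 1"
    and marg: "marginals_eq L R y dL dR"
    and r: "\<forall>i\<in>L. 0 \<le> r i" "(\<Sum>i\<in>L. r i) = 1"
    and s: "\<forall>j\<in>R. 0 \<le> s j" "(\<Sum>j\<in>R. s j) = 1"
  shows "\<exists>p u w \<delta>. (\<forall>e\<in>L \<times> R. 0 \<le> p e \<and> 0 \<le> u e \<and> 0 \<le> w e \<and> y e = p e + u e)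
     \<and> (\<Sum>e\<in>L \<times> R. u e) = \<delta> \<and> (\<Sum>e\<in>L \<times> R. w e) = \<delta>
     \<and> marginals_eq L R (\<lambda>e. p e + w e) r s
     \<and> \<delta> \<le> (\<Sum>i\<in>L. \<bar>dL i - r i\<bar>) + (\<Sum>j\<in>R. \<bar>dR j - s j\<bar>)"
proof -
  have dLs: "\<And>i. i \<in> L \<Longrightarrow> (\<Sum>j\<in>R. y (i, j)) = dL i" using marg by (simp add: marginals_eq_def)
  have dRs: "\<And>j. j \<in> R \<Longrightarrow> (\<Sum>i\<in>L. y (i, j)) = dR j" using marg by (simp add: marginals_eq_def)
  have dL0: "\<And>i. i \<in> L \<Longrightarrow> 0 \<le> dL i" using dLs y by (metis SigmaI sum_nonneg)
  have dR0: "\<And>j. j \<in> R \<Longrightarrow> 0 \<le> dR j" using dRs y by (metis SigmaI sum_nonneg)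
  define p where "p = (\<lambda>e. min (y e) (min (y e * (r (fst e) / dL (fst e))) (y e * (s (snd e) / dR (snd e)))))"
  define u where "u = (\<lambda>e. y e - p e)"
  define \<delta> where "\<delta> = (\<Sum>e\<in>L \<times> R. u e)"
  have p0: "\<forall>e\<in>L \<times> R. 0 \<le> p e"
    using y r s dL0 dR0 by (auto simp: p_def)
  have py: "\<forall>e\<in>L \<times> R. p e \<le> y e" by (auto simp: p_def)
  have u0: "\<forall>e\<in>L \<times> R. 0 \<le> u e" using py by (auto simp: u_def)
  have rowP: "(\<Sum>j\<in>R. p (i, j)) \<le> r i" if i: "i \<in> L" for i
  proof (cases "dL i = 0")
    case True
    then have "\<forall>j\<in>R. y (i, j) = 0" using sum_zero_nonneg[of R "\<lambda>j. y (i,j)"] fin y i dLs by auto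
    then have "(\<Sum>j\<in>R. p (i, j)) \<le> 0" using py i by (intro sum_nonpos) auto
    then show ?thesis using r i by force
  next
    case False
    then have dp: "dL i > 0" using dL0 i by force
    have "(\<Sum>j\<in>R. p (i, j)) \<le> (\<Sum>j\<in>R. y (i, j) * (r i / dL i))"
      by (intro sum_mono) (auto simp: p_def)
    also have "\<dots> = (\<Sum>j\<in>R. y (i, j)) * (r i / dL i)" by (rule sum_distrib_right[symmetric])
    also have "\<dots> = r i" using dLs[OF i] dp by simp
    finally show ?thesis .
  qed
  have colP: "(\<Sum>i\<in>L. p (i, j)) \<le> s j" if j: "j \<in> R" for j
  proof (cases "dR j = 0")
    case True
    then have "\<forall>i\<in>L. y (i, j) = 0" using sum_zero_nonneg[of L "\<lambda>i. y (i,j)"] fin y j dRs by auto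
    then have "(\<Sum>i\<in>L. p (i, j)) \<le> 0" using py j by (intro sum_nonpos) (metis SigmaI)
    then show ?thesis using s j by force
  next
    case False
    then have dp: "dR j > 0" using dR0 j by force
    have "(\<Sum>i\<in>L. p (i, j)) \<le> (\<Sum>i\<in>L. y (i, j) * (s j / dR j))"
      by (intro sum_mono) (auto simp: p_def)
    also have "\<dots> = (\<Sum>i\<in>L. y (i, j)) * (s j / dR j)" by (rule sum_distrib_right[symmetric])
    also have "\<dots> = s j" using dRs[OF j] dp by simp
    finally show ?thesis .
  qed
  define \<alpha> where "\<alpha> = (\<lambda>i. max 0 (1 - r i / dL i))"
  define \<beta> where "\<beta> = (\<lambda>j. max 0 (1 - s j / dR j))"
  have ub: "u e \<le> y e * \<alpha> (fst e) + y e * \<beta> (snd e)" if "e \<in> L \<times> R" for e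
    unfolding u_def p_def \<alpha>_def \<beta>_def using min_bound y that by blast
  have "\<delta> \<le> (\<Sum>e\<in>L \<times> R. y e * \<alpha> (fst e) + y e * \<beta> (snd e))"
    unfolding \<delta>_def using ub by (intro sum_mono) auto
  also have "\<dots> = (\<Sum>e\<in>L \<times> R. y e * \<alpha> (fst e)) + (\<Sum>e\<in>L \<times> R. y e * \<beta> (snd e))"
    by (simp add: sum.distrib)
  also have "(\<Sum>e\<in>L \<times> R. y e * \<alpha> (fst e)) = (\<Sum>i\<in>L. dL i * \<alpha> i)"
    by (simp add: sum_LR dLs sum_distrib_right[symmetric])
  also have "(\<Sum>e\<in>L \<times> R. y e * \<beta> (snd e)) = (\<Sum>j\<in>R. dR j * \<beta> j)"
    apply (simp add: sum_LR)
    apply (subst sum.swap)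
    apply (simp add: dRs sum_distrib_right[symmetric])
    done
  also have "(\<Sum>i\<in>L. dL i * \<alpha> i) \<le> (\<Sum>i\<in>L. \<bar>dL i - r i\<bar>)"
  proof (intro sum_mono)
    fix i assume "i \<in> L"
    then show "dL i * \<alpha> i \<le> \<bar>dL i - r i\<bar>" using dL0[of i]
      by (cases "dL i = 0") (auto simp: \<alpha>_def max_def field_simps)
  qed
  also have "(\<Sum>j\<in>R. dR j * \<beta> j) \<le> (\<Sum>j\<in>R. \<bar>dR j - s j\<bar>)"
  proof (intro sum_mono)
    fix j assume "j \<in> R"
    then show "dR j * \<beta> j \<le> \<bar>dR j - s j\<bar>" using dR0[of j]
      by (cases "dR j = 0") (auto simp: \<beta>_def max_def field_simps)
  qed
  finally have dbound: "\<delta> \<le> (\<Sum>i\<in>L. \<bar>dL i - r i\<bar>) + (\<Sum>j\<in>R. \<bar>dR j - s j\<bar>)" by simp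
  define ee where "ee = (\<lambda>i. r i - (\<Sum>j\<in>R. p (i, j)))"
  define ff where "ff = (\<lambda>j. s j - (\<Sum>i\<in>L. p (i, j)))"
  have ee0: "\<forall>i\<in>L. 0 \<le> ee i" using rowP by (simp add: ee_def)
  have ff0: "\<forall>j\<in>R. 0 \<le> ff j" using colP by (simp add: ff_def)
  have sp: "(\<Sum>e\<in>L \<times> R. p e) = 1 - \<delta>"
    using y(2) by (simp add: \<delta>_def u_def sum_subtractf)
  have see: "(\<Sum>i\<in>L. ee i) = \<delta>"
    using sp r(2) by (simp add: ee_def sum_subtractf sum.cartesian_product)
  have sff: "(\<Sum>j\<in>R. ff j) = \<delta>"
  proof -
    have "(\<Sum>j\<in>R. \<Sum>i\<in>L. p (i, j)) = (\<Sum>i\<in>L. \<Sum>j\<in>R. p (i, j))" by (rule sum.swap)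
    also have "\<dots> = 1 - \<delta>" using sp by (simp add: sum_LR)
    finally show ?thesis using s(2) by (simp add: ff_def sum_subtractf)
  qed
  define w where "w = (\<lambda>e. ee (fst e) * ff (snd e) / \<delta>)"
  have d0: "0 \<le> \<delta>" unfolding \<delta>_def using u0 by (intro sum_nonneg) auto
  have w0: "\<forall>e\<in>L \<times> R. 0 \<le> w e" using ee0 ff0 d0 by (auto simp: w_def)
  have wrow: "(\<Sum>j\<in>R. w (i, j)) = ee i" if i: "i \<in> L" for i
  proof (cases "\<delta> = 0")
    case True
    then have "ee i = 0" using sum_zero_nonneg[of L ee] fin ee0 see i by auto
    then show ?thesis by (simp add: w_def)
  next
    case False
    then show ?thesis using sff by (simp add: w_def sum_divide_distrib[symmetric] sum_distrib_left[symmetric])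
  qed
  have wcol: "(\<Sum>i\<in>L. w (i, j)) = ff j" if j: "j \<in> R" for j
  proof (cases "\<delta> = 0")
    case True
    then have "ff j = 0" using sum_zero_nonneg[of R ff] fin ff0 sff j by auto
    then show ?thesis by (simp add: w_def)
  next
    case False
    then show ?thesis using see by (simp add: w_def sum_divide_distrib[symmetric] sum_distrib_right[symmetric])
  qed
  have sw: "(\<Sum>e\<in>L \<times> R. w e) = \<delta>"
    using see wrow by (simp add: sum_LR)
  have mg: "marginals_eq L R (\<lambda>e. p e + w e) r s"
    unfolding marginals_eq_def using wrow wcol by (simp add: sum.distrib ee_def ff_def)
  show ?thesis
    apply (rule exI[of _ p], rule exI[of _ u], rule exI[of _ w], rule exI[of _ \<delta>])
    using p0 u0 w0 sw mg dbound by (auto simp: u_def \<delta>_def)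
qed

lemma xlogx_bound:
  assumes d: "0 \<le> \<delta>" and m: "(3::real) \<le> m"
  shows "- (\<delta> * ln \<delta>) \<le> 62 * \<delta> * ln m + m powr (-30)"
proof -
  have m0: "m > 0" using m by simp
  have lm: "ln m > 0" using m by simp
  have mp: "m powr (-30) > 0" using m0 by simp
  consider "\<delta> = 0" | "\<delta> > 0" "m powr (-62) \<le> \<delta>" | "\<delta> > 0" "\<delta> < m powr (-62)" using d by force
  then show ?thesis
  proof cases
    case 1 then show ?thesis using mp by simp
  next
    case 2
    have "ln (m powr (-62)) \<le> ln \<delta>" using 2 m0 by (subst ln_le_cancel_iff) auto
    then have "-62 * ln m \<le> ln \<delta>" using m0 by (simp add: ln_powr)
    then have "\<delta> * (-62 * ln m) \<le> \<delta> * ln \<delta>" using 2 by (intro mult_left_mono) auto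
    moreover have "\<delta> * (-62 * ln m) = - (62 * \<delta> * ln m)" by simp
    ultimately show ?thesis using mp by linarith
  next
    case 3
    define t where "t = \<delta> powr (1/2)"
    have t: "t > 0" using 3 by (simp add: t_def)
    have tt: "\<delta> = t * t" using 3 by (simp add: t_def powr_add[symmetric])
    have "ln \<delta> = 2 * ln t" using 3 by (simp add: t_def ln_powr)
    moreover have "ln (1/t) \<le> 1/t - 1" using t by (intro ln_le_minus_one) simp
    moreover have "ln (1/t) = - ln t" using t by (simp add: ln_div)
    ultimately have "- ln \<delta> \<le> 2 / t" by simp
    then have "\<delta> * (- ln \<delta>) \<le> \<delta> * (2 / t)" using 3 by (intro mult_left_mono) auto
    also have "\<delta> * (2 / t) = 2 * t" using tt t by (simp add: field_simps)
    also have "t < m powr (-31)"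
    proof -
      have "\<delta> powr (1/2) < (m powr (-62)) powr (1/2)" using 3 by (intro powr_less_mono2) auto
      then show ?thesis by (simp add: t_def powr_powr)
    qed
    then have "2 * t \<le> 2 * m powr (-31)" by simp
    also have "2 * m powr (-31) \<le> m * m powr (-31)" using m by (intro mult_right_mono) auto
    also have "m * m powr (-31) = m powr (-30)" using m0 by (simp add: powr_add[symmetric] powr_mult_base)
    finally have "- (\<delta> * ln \<delta>) \<le> m powr (-30)" by simp
    moreover have "0 \<le> 62 * \<delta> * ln m" using 3 lm by simp
    ultimately show ?thesis by simp
  qed
qed

lemma opt_gibbs:
  assumes fin: "finite L" "finite R" and mu: "\<mu> > 0"
    and xp: "\<forall>e\<in>L \<times> R. 0 < x e \<and> c e + \<mu> * ln (x e) = \<alpha> (fst e) + \<beta> (snd e)"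
    and z0: "\<forall>e\<in>L \<times> R. 0 \<le> z e"
    and sums: "(\<Sum>e\<in>L \<times> R. z e) = (\<Sum>e\<in>L \<times> R. x e)"
    and rows: "\<forall>i\<in>L. (\<Sum>j\<in>R. z (i, j)) = (\<Sum>j\<in>R. x (i, j))"
    and cols: "\<forall>j\<in>R. (\<Sum>i\<in>L. z (i, j)) = (\<Sum>i\<in>L. x (i, j))"
  shows "ent_obj L R c \<mu> x \<le> ent_obj L R c \<mu> z"
proof -
  have key: "(\<Sum>e\<in>L \<times> R. y e * (\<alpha> (fst e) + \<beta> (snd e)))
      = (\<Sum>i\<in>L. \<alpha> i * (\<Sum>j\<in>R. y (i, j))) + (\<Sum>j\<in>R. \<beta> j * (\<Sum>i\<in>L. y (i, j)))" for y :: "_ \<Rightarrow> real"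
  proof -
    have "(\<Sum>e\<in>L \<times> R. y e * (\<alpha> (fst e) + \<beta> (snd e)))
       = (\<Sum>i\<in>L. \<Sum>j\<in>R. y (i, j) * \<alpha> i) + (\<Sum>i\<in>L. \<Sum>j\<in>R. y (i, j) * \<beta> j)"
      by (simp add: sum_LR distrib_left sum.distrib)
    also have "(\<Sum>i\<in>L. \<Sum>j\<in>R. y (i, j) * \<beta> j) = (\<Sum>j\<in>R. \<Sum>i\<in>L. y (i, j) * \<beta> j)" by (rule sum.swap)
    finally show ?thesis by (simp add: sum_distrib_left sum_distrib_right mult.commute)
  qed
  have ex: "ent_obj L R c \<mu> x = (\<Sum>e\<in>L \<times> R. x e * (\<alpha> (fst e) + \<beta> (snd e)))"
  proof -
    have "ent_obj L R c \<mu> x = (\<Sum>e\<in>L \<times> R. x e * (c e + \<mu> * ln (x e)))"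
      unfolding ent_obj_def negent_hf sum_distrib_left sum.distrib[symmetric]
      using xp by (intro sum.cong) (auto simp: hf_def algebra_simps)
    also have "\<dots> = (\<Sum>e\<in>L \<times> R. x e * (\<alpha> (fst e) + \<beta> (snd e)))"
      using xp by (intro sum.cong) auto
    finally show ?thesis .
  qed
  have "(\<Sum>e\<in>L \<times> R. z e * (\<alpha> (fst e) + \<beta> (snd e))) + \<mu> * ((\<Sum>e\<in>L \<times> R. z e) - (\<Sum>e\<in>L \<times> R. x e))
     = (\<Sum>e\<in>L \<times> R. c e * z e + \<mu> * (z e * ln (x e) + z e - x e))"
  proof -
    have "(\<Sum>e\<in>L \<times> R. z e * (\<alpha> (fst e) + \<beta> (snd e))) = (\<Sum>e\<in>L \<times> R. c e * z e + \<mu> * (z e * ln (x e)))"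
    proof (intro sum.cong refl)
      fix e assume "e \<in> L \<times> R"
      then have "\<alpha> (fst e) + \<beta> (snd e) = c e + \<mu> * ln (x e)" using xp by auto
      then show "z e * (\<alpha> (fst e) + \<beta> (snd e)) = c e * z e + \<mu> * (z e * ln (x e))"
        by (simp add: algebra_simps)
    qed
    moreover have "(\<Sum>e\<in>L \<times> R. c e * z e + \<mu> * (z e * ln (x e) + z e - x e))
       = (\<Sum>e\<in>L \<times> R. c e * z e + \<mu> * (z e * ln (x e))) + \<mu> * ((\<Sum>e\<in>L \<times> R. z e) - (\<Sum>e\<in>L \<times> R. x e))"
      by (simp add: sum_distrib_left sum.distrib sum_subtractf algebra_simps)
    ultimately show ?thesis by simp
  qed
  also have "\<dots> \<le> (\<Sum>e\<in>L \<times> R. c e * z e + \<mu> * hf (z e))"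
    using xp z0 mu by (intro sum_mono add_left_mono mult_left_mono hf_lower) auto
  also have "\<dots> = ent_obj L R c \<mu> z"
    unfolding ent_obj_def negent_hf by (simp add: sum.distrib sum_distrib_left)
  finally have "(\<Sum>e\<in>L \<times> R. z e * (\<alpha> (fst e) + \<beta> (snd e))) \<le> ent_obj L R c \<mu> z"
    using sums by simp
  moreover have "(\<Sum>e\<in>L \<times> R. z e * (\<alpha> (fst e) + \<beta> (snd e))) = (\<Sum>e\<in>L \<times> R. x e * (\<alpha> (fst e) + \<beta> (snd e)))"
    using rows cols by (simp add: key)
  ultimately show ?thesis using ex by simp
qed


lemma final_arith:
  fixes K \<mu> \<delta> \<Delta> LM P :: real
  assumes "0 \<le> K" "0 < \<mu>" "0 \<le> \<delta>" "\<delta> \<le> 2 * \<Delta>" "2/3 \<le> LM"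
    and h: "- (\<delta> * ln \<delta>) \<le> 62 * \<delta> * LM + P"
  shows "K * \<delta> + \<mu> * (\<delta> + \<delta> * LM - \<delta> * ln \<delta>) \<le> 3 * (2 * (K + 33 * \<mu> * LM)) * \<Delta> + \<mu> * P"
proof -
  have a: "\<delta> * (2/3) \<le> \<delta> * LM" using assms by (intro mult_left_mono) auto
  have b: "\<delta> * LM \<le> (2 * \<Delta>) * LM" using assms by (intro mult_right_mono) auto
  have c: "K * \<delta> \<le> K * (2 * \<Delta>)" using assms by (intro mult_left_mono) auto
  have d: "0 \<le> K * \<Delta>" using assms by simp
  have d2: "0 \<le> \<Delta> * LM" using assms by simp
  have e: "\<delta> + \<delta> * LM - \<delta> * ln \<delta> \<le> 198 * (\<Delta> * LM) + P" using a b h d2 by (simp add: algebra_simps) 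
  have f: "\<mu> * (\<delta> + \<delta> * LM - \<delta> * ln \<delta>) \<le> \<mu> * (198 * (\<Delta> * LM) + P)"
    using e assms by (intro mult_left_mono) auto
  show ?thesis using c d f by (simp add: algebra_simps)
qed


theorem mainTheorem14:
  fixes L :: "'a set" and R :: "'b set"
    and c :: "'a \<times> 'b \<Rightarrow> real" and \<mu> \<Delta> :: real
    and dL :: "'a \<Rightarrow> real" and dR :: "'b \<Rightarrow> real"
    and u :: "'a \<Rightarrow> real" and v :: "'b \<Rightarrow> real"
  defines "m \<equiv> card L * card R"
  defines "X \<equiv> (\<lambda>(i, j). u i * exp (- c (i, j) / \<mu>) * v j)"
  defines "xhat \<equiv> (\<lambda>e. X e / (\<Sum>e'\<in>L \<times> R. X e'))"
  defines "Cc \<equiv> 2 * (Max ((\<lambda>e. \<bar>c e\<bar>) ` (L \<times> R)) + 33 * \<mu> * ln (real m))"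
  assumes "finite L" "finite R" "L \<noteq> {}" "R \<noteq> {}"
    and "m \<ge> 3"
    and "\<mu> > 0"
    and "\<forall>e\<in>L \<times> R. c e \<ge> 0"
    and "dL \<in> prob_simplex L" "dR \<in> prob_simplex R"
    and "\<forall>i\<in>L. u i > 0" "\<forall>j\<in>R. v j > 0"
    and "\<Delta> \<ge> 0"
    and "(\<Sum>i\<in>L. \<bar>(\<Sum>j\<in>R. X (i, j)) - dL i\<bar>) + (\<Sum>j\<in>R. \<bar>(\<Sum>i\<in>L. X (i, j)) - dR j\<bar>) \<le> \<Delta>"
  shows "xhat \<in> prob_simplex (L \<times> R) \<and>
         ent_obj L R c \<mu> xhat \<le> OPT L R c \<mu> dL dR + 3 * Cc * \<Delta> + \<mu> * real m powr (-30)"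
  
proof -
  let ?S = "L \<times> R"
  have finS: "finite ?S" using assms(5,6) by simp
  have neS: "?S \<noteq> {}" using assms(7,8) by simp
  have cardS: "card ?S = m" by (simp add: m_def card_cartesian_product)
  have Xpos: "\<forall>e\<in>?S. 0 < X e" using assms(14,15) by (auto simp: X_def)
  define Z where "Z = (\<Sum>e\<in>?S. X e)"
  have Z: "Z > 0" unfolding Z_def using Xpos finS neS by (intro sum_pos) auto
  have xhZ: "xhat = (\<lambda>e. X e / Z)" by (simp add: xhat_def Z_def)
  have xpos: "\<forall>e\<in>?S. 0 < xhat e" using Xpos Z by (simp add: xhZ)
  have sumx: "(\<Sum>e\<in>?S. xhat e) = 1" using Z by (simp add: xhZ sum_divide_distrib[symmetric] Z_def)
  have xnn: "\<forall>e\<in>?S. 0 \<le> xhat e" using xpos by (simp add: less_imp_le)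
  have Xnn: "\<forall>e\<in>?S. 0 \<le> X e" using Xpos by (simp add: less_imp_le)
  have part1: "xhat \<in> prob_simplex ?S" using xpos sumx by (auto simp: prob_simplex_def less_imp_le)
  define r where "r = (\<lambda>i. \<Sum>j\<in>R. xhat (i, j))"
  define s where "s = (\<lambda>j. \<Sum>i\<in>L. xhat (i, j))"
  have r0: "\<forall>i\<in>L. 0 \<le> r i" using xnn by (auto simp: r_def intro!: sum_nonneg)
  have s0: "\<forall>j\<in>R. 0 \<le> s j" using xnn by (auto simp: s_def intro!: sum_nonneg)
  have r1: "(\<Sum>i\<in>L. r i) = 1" using sumx by (simp add: r_def sum_LR)
  have s1: "(\<Sum>j\<in>R. s j) = 1"
  proof -
    have "(\<Sum>j\<in>R. s j) = (\<Sum>i\<in>L. \<Sum>j\<in>R. xhat (i, j))" unfolding s_def by (rule sum.swap)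
    then show ?thesis using sumx by (simp add: sum_LR)
  qed
  define \<alpha> where "\<alpha> = (\<lambda>i. \<mu> * ln (u i) - \<mu> * ln Z)"
  define \<beta> where "\<beta> = (\<lambda>j. \<mu> * ln (v j))"
  have gibbs: "\<forall>e\<in>?S. 0 < xhat e \<and> c e + \<mu> * ln (xhat e) = \<alpha> (fst e) + \<beta> (snd e)"
  proof
    fix e assume e: "e \<in> ?S"
    obtain i j where ij: "e = (i, j)" "i \<in> L" "j \<in> R" using e by auto
    have ui: "u i > 0" and vj: "v j > 0" using ij assms(14,15) by auto
    have "ln (xhat e) = ln (u i) + (- c (i, j) / \<mu>) + ln (v j) - ln Z"
      using ui vj Z by (simp add: xhZ X_def ij ln_div ln_mult)
    then have "\<mu> * ln (xhat e) = \<mu> * ln (u i) - c (i, j) + \<mu> * ln (v j) - \<mu> * ln Z"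
      using assms(10) by (simp add: field_simps)
    then have "c e + \<mu> * ln (xhat e) = \<alpha> (fst e) + \<beta> (snd e)"
      using assms(10) by (simp add: \<alpha>_def \<beta>_def ij algebra_simps)
    then show "0 < xhat e \<and> c e + \<mu> * ln (xhat e) = \<alpha> (fst e) + \<beta> (snd e)" using xpos e by auto
  qed
  define K where "K = Max ((\<lambda>e. \<bar>c e\<bar>) ` ?S)"
  have cK: "\<forall>e\<in>?S. 0 \<le> c e \<and> c e \<le> K"
  proof
    fix e assume e: "e \<in> ?S"
    have "\<bar>c e\<bar> \<le> K" unfolding K_def using finS e by (intro Max_ge) auto
    then show "0 \<le> c e \<and> c e \<le> K" using assms(11) e by auto
  qed
  have K0: "0 \<le> K" using cK neS by force
  have m3: "(3::real) \<le> real m" using assms(9) by simp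
  have LM: "2/3 \<le> ln (real m)"
  proof -
    have "1 - 1 / real m \<le> ln (real m)" using m3 by (intro ln_ge_1m) simp
    moreover have "1 / real m \<le> 1/3" using m3 by (simp add: field_simps)
    ultimately show ?thesis by simp
  qed
  have CcK: "Cc = 2 * (K + 33 * \<mu> * ln (real m))" by (simp add: Cc_def K_def)
  define rX where "rX = (\<lambda>i. \<Sum>j\<in>R. X (i, j))"
  define cX where "cX = (\<lambda>j. \<Sum>i\<in>L. X (i, j))"
  define EL where "EL = (\<Sum>i\<in>L. \<bar>rX i - dL i\<bar>)"
  define ER where "ER = (\<Sum>j\<in>R. \<bar>cX j - dR j\<bar>)"
  have E: "EL + ER \<le> \<Delta>" using assms(17) by (simp add: EL_def ER_def rX_def cX_def)
  have dL1: "(\<Sum>i\<in>L. dL i) = 1" using assms(12) by (simp add: prob_simplex_def)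
  have dR1: "(\<Sum>j\<in>R. dR j) = 1" using assms(13) by (simp add: prob_simplex_def)
  have rX0: "\<forall>i\<in>L. 0 \<le> rX i" using Xnn by (auto simp: rX_def intro!: sum_nonneg)
  have cX0: "\<forall>j\<in>R. 0 \<le> cX j" using Xnn by (auto simp: cX_def intro!: sum_nonneg)
  have ZrX: "Z = (\<Sum>i\<in>L. rX i)" by (simp add: Z_def rX_def sum_LR)
  have ZcX: "Z = (\<Sum>j\<in>R. cX j)"
  proof -
    have "(\<Sum>j\<in>R. cX j) = (\<Sum>i\<in>L. \<Sum>j\<in>R. X (i, j))" unfolding cX_def by (rule sum.swap)
    then show ?thesis by (simp add: Z_def sum_LR)
  qed
  have ZL: "\<bar>Z - 1\<bar> \<le> EL"
  proof -
    have "Z - 1 = (\<Sum>i\<in>L. rX i - dL i)" using ZrX dL1 by (simp add: sum_subtractf)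
    then show ?thesis unfolding EL_def by (simp add: sum_abs)
  qed
  have ZR: "\<bar>Z - 1\<bar> \<le> ER"
  proof -
    have "Z - 1 = (\<Sum>j\<in>R. cX j - dR j)" using ZcX dR1 by (simp add: sum_subtractf)
    then show ?thesis unfolding ER_def by (simp add: sum_abs)
  qed
  have rr: "r i = rX i / Z" for i by (simp add: r_def rX_def xhZ sum_divide_distrib)
  have ss: "s j = cX j / Z" for j by (simp add: s_def cX_def xhZ sum_divide_distrib)
  have DL: "(\<Sum>i\<in>L. \<bar>dL i - r i\<bar>) \<le> EL + \<bar>Z - 1\<bar>"
  proof -
    have "(\<Sum>i\<in>L. \<bar>dL i - r i\<bar>) \<le> (\<Sum>i\<in>L. \<bar>rX i - dL i\<bar> + rX i * \<bar>1 - 1 / Z\<bar>)"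
    proof (intro sum_mono)
      fix i assume i: "i \<in> L"
      have eq: "rX i - rX i / Z = rX i * (1 - 1/Z)" by (simp add: algebra_simps)
      have "\<bar>rX i - rX i / Z\<bar> = rX i * \<bar>1 - 1/Z\<bar>" using rX0 i
        unfolding eq abs_mult by simp
      then show "\<bar>dL i - r i\<bar> \<le> \<bar>rX i - dL i\<bar> + rX i * \<bar>1 - 1 / Z\<bar>" unfolding rr by linarith
    qed
    also have "\<dots> = EL + Z * \<bar>1 - 1/Z\<bar>" by (simp add: EL_def sum.distrib ZrX sum_distrib_right)
    also have "Z * \<bar>1 - 1/Z\<bar> = \<bar>Z - 1\<bar>"
    proof -
      have "Z * \<bar>1 - 1/Z\<bar> = \<bar>Z * (1 - 1/Z)\<bar>" using Z by (simp add: abs_mult)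
      also have "Z * (1 - 1/Z) = Z - 1" using Z by (simp add: field_simps)
      finally show ?thesis .
    qed
    finally show ?thesis .
  qed
  have DR: "(\<Sum>j\<in>R. \<bar>dR j - s j\<bar>) \<le> ER + \<bar>Z - 1\<bar>"
  proof -
    have "(\<Sum>j\<in>R. \<bar>dR j - s j\<bar>) \<le> (\<Sum>j\<in>R. \<bar>cX j - dR j\<bar> + cX j * \<bar>1 - 1 / Z\<bar>)"
    proof (intro sum_mono)
      fix j assume j: "j \<in> R"
      have eq: "cX j - cX j / Z = cX j * (1 - 1/Z)" by (simp add: algebra_simps)
      have "\<bar>cX j - cX j / Z\<bar> = cX j * \<bar>1 - 1/Z\<bar>" using cX0 j
        unfolding eq abs_mult by simp
      then show "\<bar>dR j - s j\<bar> \<le> \<bar>cX j - dR j\<bar> + cX j * \<bar>1 - 1 / Z\<bar>" unfolding ss by linarith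
    qed
    also have "\<dots> = ER + Z * \<bar>1 - 1/Z\<bar>" by (simp add: ER_def sum.distrib ZcX sum_distrib_right)
    also have "Z * \<bar>1 - 1/Z\<bar> = \<bar>Z - 1\<bar>"
    proof -
      have "Z * \<bar>1 - 1/Z\<bar> = \<bar>Z * (1 - 1/Z)\<bar>" using Z by (simp add: abs_mult)
      also have "Z * (1 - 1/Z) = Z - 1" using Z by (simp add: field_simps)
      finally show ?thesis .
    qed
    finally show ?thesis .
  qed
  have Dle: "(\<Sum>i\<in>L. \<bar>dL i - r i\<bar>) + (\<Sum>j\<in>R. \<bar>dR j - s j\<bar>) \<le> 2 * \<Delta>"
    using DL DR ZL ZR E by linarith
  define B where "B = 3 * Cc * \<Delta> + \<mu> * real m powr (-30)"
  define F where "F = {x. x \<in> prob_simplex ?S \<and> marginals_eq L R x dL dR}"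
  have bound: "ent_obj L R c \<mu> xhat - B \<le> ent_obj L R c \<mu> y" if yF: "y \<in> F" for y
  proof -
    have y0: "\<forall>e\<in>?S. 0 \<le> y e" and y1: "(\<Sum>e\<in>?S. y e) = 1" and ym: "marginals_eq L R y dL dR"
      using yF by (auto simp: F_def prob_simplex_def)
    obtain p uu w \<delta> where puw: "\<forall>e\<in>?S. 0 \<le> p e \<and> 0 \<le> uu e \<and> 0 \<le> w e \<and> y e = p e + uu e"
      and su: "(\<Sum>e\<in>?S. uu e) = \<delta>" and sw: "(\<Sum>e\<in>?S. w e) = \<delta>"
      and mg: "marginals_eq L R (\<lambda>e. p e + w e) r s"
      and db: "\<delta> \<le> (\<Sum>i\<in>L. \<bar>dL i - r i\<bar>) + (\<Sum>j\<in>R. \<bar>dR j - s j\<bar>)"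
      using rounding[OF assms(5,6) y0 y1 ym r0 r1 s0 s1] by blast
    have d0: "0 \<le> \<delta>" using su puw by (metis sum_nonneg)
    have y'0: "\<forall>e\<in>?S. 0 \<le> p e + w e" using puw by auto
    have rowsy': "\<forall>i\<in>L. (\<Sum>j\<in>R. p (i, j) + w (i, j)) = r i" using mg by (simp add: marginals_eq_def)
    have colsy': "\<forall>j\<in>R. (\<Sum>i\<in>L. p (i, j) + w (i, j)) = s j" using mg by (simp add: marginals_eq_def)
    have sy': "(\<Sum>e\<in>?S. p e + w e) = 1" using rowsy' r1 by (simp add: sum_LR)
    have y'1: "\<forall>e\<in>?S. p e + w e \<le> 1"
    proof
      fix e assume "e \<in> ?S"
      then have "p e + w e \<le> (\<Sum>e\<in>?S. p e + w e)" using y'0 finS by (intro member_le_sum) auto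
      then show "p e + w e \<le> 1" using sy' by simp
    qed
    have o1: "ent_obj L R c \<mu> xhat \<le> ent_obj L R c \<mu> (\<lambda>e. p e + w e)"
      by (rule opt_gibbs[OF assms(5,6) assms(10) gibbs y'0]) (use sy' sumx rowsy' colsy' in \<open>auto simp: r_def s_def\<close>)
    have o2: "ent_obj L R c \<mu> (\<lambda>e. p e + w e) \<le> ent_obj L R c \<mu> (\<lambda>e. p e + uu e)
          + K * \<delta> + \<mu> * (\<delta> + \<delta> * ln (real (card ?S)) - \<delta> * ln \<delta>)"
      by (rule obj_perturb[OF finS neS _ su sw d0 cK assms(10)]) (use puw y'1 in auto)
    have o3: "ent_obj L R c \<mu> (\<lambda>e. p e + uu e) = ent_obj L R c \<mu> y"
      unfolding ent_obj_def negent_def using puw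
      by (intro arg_cong2[where f="(+)"] arg_cong2[where f="(*)"] refl sum.cong) auto
    have xl: "- (\<delta> * ln \<delta>) \<le> 62 * \<delta> * ln (real m) + real m powr (-30)"
      by (rule xlogx_bound[OF d0 m3])
    have fa: "K * \<delta> + \<mu> * (\<delta> + \<delta> * ln (real m) - \<delta> * ln \<delta>)
       \<le> 3 * (2 * (K + 33 * \<mu> * ln (real m))) * \<Delta> + \<mu> * real m powr (-30)"
      by (rule final_arith[OF K0 assms(10) d0 _ LM xl]) (use db Dle in linarith)
    show ?thesis using o1 o2 o3 fa cardS unfolding B_def CcK by simp
  qed
  define y0 where "y0 = (\<lambda>e. dL (fst e) * dR (snd e))"
  have "y0 \<in> F"
  proof -
    have dL0: "\<forall>i\<in>L. 0 \<le> dL i" and dR0: "\<forall>j\<in>R. 0 \<le> dR j"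
      using assms(12,13) by (auto simp: prob_simplex_def)
    have "(\<Sum>e\<in>?S. y0 e) = 1" using dL1 dR1
      by (simp add: y0_def sum_LR sum_distrib_left[symmetric] sum_distrib_right[symmetric])
    moreover have "marginals_eq L R y0 dL dR" using dL1 dR1
      by (simp add: marginals_eq_def y0_def sum_distrib_left[symmetric] sum_distrib_right[symmetric])
    ultimately show ?thesis using dL0 dR0 by (auto simp: F_def prob_simplex_def y0_def)
  qed
  then have ne: "ent_obj L R c \<mu> ` F \<noteq> {}" by blast
  have "ent_obj L R c \<mu> xhat - B \<le> Inf (ent_obj L R c \<mu> ` F)"
    using ne bound by (intro cInf_greatest) auto
  then have "ent_obj L R c \<mu> xhat \<le> OPT L R c \<mu> dL dR + B"
    by (simp add: OPT_def F_def)
  then show ?thesis using part1 by (simp add: B_def)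
qed

end
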